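(* Let $q$ be a power of an odd prime $p$ such that $8\mid q-1$ and $\sqrt{2}\in\mathbb{F}_q$, and let $\mathfrak{C}/\mathbb{F}_q$ be the genus $2$ hyperelliptic curve $y^2=x^5+x$. (i) If $p\neq 3,5$, then $\mathrm{Aut}(\mathfrak{C}/\mathbb{F}_q)\simeq\tilde{S}_4$ (in particular $\mathrm{Aut}(\mathfrak{C}/\mathbb{F}_q)=\mathrm{Aut}(\mathfrak{C})$, of order $48$). (ii) If $p=5$, then $\mathrm{Aut}(\mathfrak{C}/\mathbb{F}_q)\simeq\tilde{S}_5$ (in particular $\mathrm{Aut}(\mathfrak{C}/\mathbb{F}_q)=\mathrm{Aut}(\mathfrak{C})$, of order $240$).
   Context: For a genus $2$ curve $\mathfrak{C}:y^2=f(x)$ over $\mathbb{F}_q$ ($q$ odd), automorphisms of $\mathfrak{C}$ over $\overline{\mathbb{F}}_q$ correspond to matrices $M=\begin{pmatrix}a&b\\c&d\end{pmatrix}\in\mathrm{GL}_2(\overline{\mathbb{F}}_q)$ acting by $x\mapsto \frac{ax+b}{cx+d}$, $y\mapsto \frac{(ad-bc)y}{(cx+d)^3}$ (and preserving the curve). $\mathrm{Aut}(\mathfrak{C})$ denotes the full automorphism group over $\overline{\mathbb{F}}_q$ (including the hyperelliptic involution, corresponding to $-I$), and $\mathrm{Aut}(\mathfrak{C}/\mathbb{F}_q)$ its subgroup of automorphisms whose matrix has entries in $\mathbb{F}_q$. $\tilde{S}_4$ denotes the group of order $48$ (a double cover of $S_4$) which is the full automorphism group over $\overline{\mathbb{F}}_p$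 of $y^2=x^5-x$ for $p\neq 2,3,5$; $\tilde{S}_5$ denotes the group of order $240$ which is the full automorphism group over $\overline{\mathbb{F}}_5$ of $y^2=x^5-x$. *)

theory Defs
  imports "HOL-Algebra.Algebraic_Closure_Type" "HOL-Computational_Algebra.Polynomial"
begin

text \<open>A 2x2 matrix (a b; c d) is represented as the tuple (a, b, c, d).\<close>
type_synonym 'k mat2 = "'k \<times> 'k \<times> 'k \<times> 'k"

definition mat2_mult :: "'k::comm_ring_1 mat2 \<Rightarrow> 'k mat2 \<Rightarrow> 'k mat2" where
  "mat2_mult M N = (case M of (a, b, c, d) \<Rightarrow> case N of (a', b', c', d') \<Rightarrow>
     (a*a' + b*c', a*b' + b*d', c*a' + d*c', c*b' + d*d'))"

definition mat2_det :: "'k::comm_ring_1 mat2 \<Rightarrow> 'k" where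
  "mat2_det M = (case M of (a, b, c, d) \<Rightarrow> a*d - b*c)"

text \<open>The matrix M acts by x |-> (ax+b)/(cx+d), y |-> (ad-bc) y/(cx+d)^3.  It maps the
  genus 2 curve y^2 = f(x) (deg f <= 6) to itself iff
  (ad-bc)^2 f(x) = (cx+d)^6 f((ax+b)/(cx+d)) as polynomials, i.e.
  (ad-bc)^2 f = sum_i f_i (ax+b)^i (cx+d)^(6-i).\<close>
definition preserves_curve :: "'k::field poly \<Rightarrow> 'k mat2 \<Rightarrow> bool" where
  "preserves_curve f M = (case M of (a, b, c, d) \<Rightarrow>
     (\<Sum>i\<le>6. smult (coeff f i) ([:b, a:] ^ i * [:d, c:] ^ (6 - i)))
       = smult ((a*d - b*c)^2) f)"

definition curve_aut_set :: "'k::field poly \<Rightarrow> 'k mat2 set" where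
  "curve_aut_set f = {M. mat2_det M \<noteq> 0 \<and> preserves_curve f M}"

definition curve_aut_group :: "'k::field poly \<Rightarrow> 'k mat2 monoid" where
  "curve_aut_group f = \<lparr>carrier = curve_aut_set f, monoid.mult = mat2_mult, one = (1, 0, 0, 1)\<rparr>"

definition mat2_map :: "('k \<Rightarrow> 'l) \<Rightarrow> 'k mat2 \<Rightarrow> 'l mat2" where
  "mat2_map h M = (case M of (a, b, c, d) \<Rightarrow> (h a, h b, h c, h d))"

definition f_plus :: "'k::field poly" where "f_plus = [:0, 1, 0, 0, 0, 1:]"
definition f_minus :: "'k::field poly" where "f_minus = [:0, -1, 0, 0, 0, 1:]"

text \<open>Aut(C) over the algebraic closure of 'k; S4tilde resp. S5tilde is (by the paper's
  definition) the full automorphism group of y^2 = x^5 - x over the algebraic closure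
  of F_p for p not in {2,3,5} resp. p = 5.\<close>
definition Aut_bar :: "'k::field poly \<Rightarrow> 'k alg_closure mat2 monoid" where
  "Aut_bar f = curve_aut_group (map_poly to_ac f)"

end

theory Submission
  imports Defs
begin


lemma pow5: "[:b, a:] ^ 5 = [:b^5, 5*a*b^4, 10*a^2*b^3, 10*a^3*b^2, 5*a^4*b, a^5:]" for a b :: "'k::field"
  by (simp add: numeral_eq_Suc algebra_simps)

definition eqs_plus :: "'k::field \<Rightarrow> 'k \<Rightarrow> 'k \<Rightarrow> 'k \<Rightarrow> bool" where
 "eqs_plus a b c d \<longleftrightarrow>
   b^5*d + b*d^5 = 0 \<and>
   b^5*c + 5*a*b^4*d + a*d^5 + 5*b*c*d^4 = (a*d-b*c)^2 \<and>
   5*a*b^4*c + 10*a^2*b^3*d + 5*a*c*d^4 + 10*b*c^2*d^3 = 0 \<and>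
   10*a^2*b^3*c + 10*a^3*b^2*d + 10*a*c^2*d^3 + 10*b*c^3*d^2 = 0 \<and>
   10*a^3*b^2*c + 5*a^4*b*d + 10*a*c^3*d^2 + 5*b*c^4*d = 0 \<and>
   5*a^4*b*c + a^5*d + 5*a*c^4*d + b*c^5 = (a*d-b*c)^2 \<and>
   a^5*c + a*c^5 = 0"

definition eqs_minus :: "'k::field \<Rightarrow> 'k \<Rightarrow> 'k \<Rightarrow> 'k \<Rightarrow> bool" where
 "eqs_minus a b c d \<longleftrightarrow>
   b^5*d - b*d^5 = 0 \<and>
   b^5*c + 5*a*b^4*d - a*d^5 - 5*b*c*d^4 = - ((a*d-b*c)^2) \<and>
   5*a*b^4*c + 10*a^2*b^3*d - 5*a*c*d^4 - 10*b*c^2*d^3 = 0 \<and>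
   10*a^2*b^3*c + 10*a^3*b^2*d - 10*a*c^2*d^3 - 10*b*c^3*d^2 = 0 \<and>
   10*a^3*b^2*c + 5*a^4*b*d - 10*a*c^3*d^2 - 5*b*c^4*d = 0 \<and>
   5*a^4*b*c + a^5*d - 5*a*c^4*d - b*c^5 = (a*d-b*c)^2 \<and>
   a^5*c - a*c^5 = 0"

lemma prod_plus: "[:b, a:] ^ 5 * [:d, c:] + [:b, a:] * [:d, c:] ^ 5 =
  [: b^5*d + b*d^5, b^5*c + 5*a*b^4*d + a*d^5 + 5*b*c*d^4,
     5*a*b^4*c + 10*a^2*b^3*d + 5*a*c*d^4 + 10*b*c^2*d^3,
     10*a^2*b^3*c + 10*a^3*b^2*d + 10*a*c^2*d^3 + 10*b*c^3*d^2,
     10*a^3*b^2*c + 5*a^4*b*d + 10*a*c^3*d^2 + 5*b*c^4*d,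
     5*a^4*b*c + a^5*d + 5*a*c^4*d + b*c^5, a^5*c + a*c^5 :]" for a b c d :: "'k::field"
  by (simp add: pow5 algebra_simps)

lemma prod_minus: "[:b, a:] ^ 5 * [:d, c:] - [:b, a:] * [:d, c:] ^ 5 =
  [: b^5*d - b*d^5, b^5*c + 5*a*b^4*d - a*d^5 - 5*b*c*d^4,
     5*a*b^4*c + 10*a^2*b^3*d - 5*a*c*d^4 - 10*b*c^2*d^3,
     10*a^2*b^3*c + 10*a^3*b^2*d - 10*a*c^2*d^3 - 10*b*c^3*d^2,
     10*a^3*b^2*c + 5*a^4*b*d - 10*a*c^3*d^2 - 5*b*c^4*d,
     5*a^4*b*c + a^5*d - 5*a*c^4*d - b*c^5, a^5*c - a*c^5 :]" for a b c d :: "'k::field"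
  by (simp add: pow5 algebra_simps)

lemma pres_plus: "preserves_curve (f_plus::'k::field poly) (a,b,c,d) \<longleftrightarrow> eqs_plus a b c d"
proof -
  have "preserves_curve (f_plus::'k::field poly) (a,b,c,d) \<longleftrightarrow>
     [:b, a:] ^ 5 * [:d, c:] + [:b, a:] * [:d, c:] ^ 5 = smult ((a*d-b*c)^2) [:0,1,0,0,0,1:]"
    unfolding preserves_curve_def f_plus_def
    by (simp add: atMost_Suc numeral_eq_Suc add.commute del: power_Suc)
  also have "\<dots> \<longleftrightarrow> eqs_plus a b c d"
    unfolding prod_plus eqs_plus_def by simp
  finally show ?thesis .
qed

lemma pres_minus: "preserves_curve (f_minus::'k::field poly) (a,b,c,d) \<longleftrightarrow> eqs_minus a b c d"
proof -
  have "preserves_curve (f_minus::'k::field poly) (a,b,c,d) \<longleftrightarrow>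
     [:b, a:] ^ 5 * [:d, c:] - [:b, a:] * [:d, c:] ^ 5 = smult ((a*d-b*c)^2) [:0,-1,0,0,0,1:]"
    unfolding preserves_curve_def f_minus_def
    apply (simp add: atMost_Suc numeral_eq_Suc del: power_Suc)
    apply (rule arg_cong[where f="\<lambda>x. x = _"])
    by (simp add: algebra_simps)
  also have "\<dots> \<longleftrightarrow> eqs_minus a b c d"
    unfolding prod_minus eqs_minus_def by simp
  finally show ?thesis .
qed

lemma conj_eqs:
  fixes z a b c d :: "'k::field"
  assumes z: "z^4 = -1"
  shows "eqs_plus a (z*b) c d \<longleftrightarrow> eqs_minus a b (c*z) d"
proof -
  have z0: "z \<noteq> 0" using z by auto
  let ?D = "a*d - b*(c*z)"
  have D: "a*d - (z*b)*c = ?D" by simp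
  have e0: "(z*b)^5*d + (z*b)*d^5 = - z * (b^5*d - b*d^5)" using z by (Groebner_Basis.algebra)
  have e1: "(z*b)^5*c + 5*a*(z*b)^4*d + a*d^5 + 5*(z*b)*c*d^4 =
     - (b^5*(c*z) + 5*a*b^4*d - a*d^5 - 5*b*(c*z)*d^4)" using z by (Groebner_Basis.algebra)
  have e2: "5*a*(z*b)^4*c + 10*a^2*(z*b)^3*d + 5*a*c*d^4 + 10*(z*b)*c^2*d^3 =
     z^3 * (5*a*b^4*(c*z) + 10*a^2*b^3*d - 5*a*(c*z)*d^4 - 10*b*(c*z)^2*d^3)" using z by (Groebner_Basis.algebra)
  have e3: "10*a^2*(z*b)^3*c + 10*a^3*(z*b)^2*d + 10*a*c^2*d^3 + 10*(z*b)*c^3*d^2 =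
     z^2 * (10*a^2*b^3*(c*z) + 10*a^3*b^2*d - 10*a*(c*z)^2*d^3 - 10*b*(c*z)^3*d^2)" using z by (Groebner_Basis.algebra)
  have e4: "10*a^3*(z*b)^2*c + 5*a^4*(z*b)*d + 10*a*c^3*d^2 + 5*(z*b)*c^4*d =
     z * (10*a^3*b^2*(c*z) + 5*a^4*b*d - 10*a*(c*z)^3*d^2 - 5*b*(c*z)^4*d)" using z by (Groebner_Basis.algebra)
  have e5: "5*a^4*(z*b)*c + a^5*d + 5*a*c^4*d + (z*b)*c^5 =
     (5*a^4*b*(c*z) + a^5*d - 5*a*(c*z)^4*d - b*(c*z)^5)" using z by (Groebner_Basis.algebra)
  have e6: "a^5*c + a*c^5 = - (z^3 * (a^5*(c*z) - a*(c*z)^5))" using z by (Groebner_Basis.algebra)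
  show ?thesis unfolding eqs_plus_def eqs_minus_def D e0 e1 e2 e3 e4 e5 e6
    apply (intro conj_cong)
    using z0 by (auto simp: minus_equation_iff) (simp_all add: algebra_simps)
qed

lemma nec_plus:
  fixes a b c d :: "'k::field"
  assumes two: "(2::'k) \<noteq> 0" and five: "(5::'k) \<noteq> 0"
    and E: "eqs_plus a b c d" and D0: "a*d - b*c \<noteq> 0"
  shows "(b = 0 \<and> c = 0 \<and> a^8 = 1 \<and> d = a^3) \<or> (a = 0 \<and> d = 0 \<and> c^8 = 1 \<and> b = c^3) \<or>
         (a \<noteq> 0 \<and> c^4 = -(a^4) \<and> 16*a^8 = 1 \<and> d = -2*a^3 \<and> b*c = 2*a^4)"
proof -
  from E have E0: "b^5*d + b*d^5 = 0" and
   E1: "b^5*c + 5*a*b^4*d + a*d^5 + 5*b*c*d^4 = (a*d-b*c)^2" and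
   E4: "10*a^3*b^2*c + 5*a^4*b*d + 10*a*c^3*d^2 + 5*b*c^4*d = 0" and
   E5: "5*a^4*b*c + a^5*d + 5*a*c^4*d + b*c^5 = (a*d-b*c)^2" and
   E6: "a^5*c + a*c^5 = 0" unfolding eqs_plus_def by auto
  have ten: "(10::'k) \<noteq> 0" using two five by (metis mult_eq_0_iff num_double numeral_times_numeral)
  have four: "(4::'k) \<noteq> 0" using two by (metis mult_eq_0_iff num_double numeral_times_numeral)
  show ?thesis
  proof (cases "c = 0")
    case True
    then have a0: "a \<noteq> 0" and d0: "d \<noteq> 0" using D0 by auto
    have "a^2*d*(a^3 - d) = 0" using E5 True by Groebner_Basis.algebra
    then have ad: "d = a^3" using a0 d0 by simp
    have "5*a^4*d*b = 0" using E4 True by Groebner_Basis.algebra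
    then have b0: "b = 0" using a0 d0 five by simp
    have "a^2*d^2*(d^3 - a) = 0" using E1 True b0 by Groebner_Basis.algebra
    then have "d^3 = a" using a0 d0 by simp
    then have "(a^3)^3 = a" using ad by simp
    then have "a^9 = a" by (simp add: power_mult[symmetric])
    then have "a*(a^8 - 1) = 0" by (simp add: algebra_simps flip: power_Suc)
    then have "a^8 = 1" using a0 by simp
    then show ?thesis using b0 True ad by simp
  next
    case c0: False
    show ?thesis
    proof (cases "a = 0")
      case True
      then have b0: "b \<noteq> 0" using D0 by auto
      have "b^2*c^2*(c^3 - b) = 0" using E5 True by Groebner_Basis.algebra
      then have bc: "b = c^3" using b0 c0 by simp
      have "5*b*c^4*d = 0" using E4 True by Groebner_Basis.algebra
      then have d0: "d = 0" using b0 c0 five by simp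
      have "b^2*c*(b^3 - c) = 0" using E1 True d0 by Groebner_Basis.algebra
      then have "b^3 = c" using b0 c0 by simp
      then have "(c^3)^3 = c" using bc by simp
      then have "c^9 = c" by (simp add: power_mult[symmetric])
      then have "c*(c^8 - 1) = 0" by (simp add: algebra_simps flip: power_Suc)
      then have "c^8 = 1" using c0 by simp
      then show ?thesis using bc True d0 by simp
    next
      case a0: False
      have "a*c*(a^4 + c^4) = 0" using E6 by Groebner_Basis.algebra
      then have c4: "c^4 = -(a^4)" using a0 c0 by (simp add: eq_neg_iff_add_eq_0 add.commute)
      have b0: "b \<noteq> 0"
      proof
        assume b0: "b = 0"
        then have "d \<noteq> 0" using D0 by auto
        moreover have "10*a*c^3*d^2 = 0" using E4 b0 by simp
        ultimately show False using a0 c0 ten by simp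
      qed
      have d0: "d \<noteq> 0"
      proof
        assume d0: "d = 0"
        have "10*a^3*b^2*c = 0" using E4 d0 by simp
        then show False using a0 c0 b0 ten by simp
      qed
      have "b*d*(b^4 + d^4) = 0" using E0 by Groebner_Basis.algebra
      then have d4: "d^4 = -(b^4)" using b0 d0 by (simp add: eq_neg_iff_add_eq_0 add.commute)
      have "10*a*c*(a^2*b^2 + c^2*d^2) = 0" using E4 c4 by Groebner_Basis.algebra
      then have q: "a^2*b^2 + c^2*d^2 = 0" using a0 c0 ten by simp
      have "c^2*((a*d - b*c)*(a*d + b*c)) = 0" using q c4 by Groebner_Basis.algebra
      then have adbc: "a*d = -(b*c)" using c0 D0 by (simp add: eq_neg_iff_add_eq_0)
      have "4*a^2*d*(2*a^3 + d) = 0" using E5 c4 adbc by Groebner_Basis.algebra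
      then have dd: "d = -2*a^3" using a0 d0 four by (simp add: eq_neg_iff_add_eq_0 add.commute)
      have "4*a*d*(2*b^4 - a*d) = 0" using E1 d4 adbc by Groebner_Basis.algebra
      then have "2*b^4 = a*d" using a0 d0 four by simp
      then have b4: "b^4 = -(a^4)" using dd two by Groebner_Basis.algebra
      have bc: "b*c = 2*a^4" using adbc dd by Groebner_Basis.algebra
      have "(b*c)^4 = b^4*c^4" by (simp add: power_mult_distrib)
      also have "\<dots> = (a^4)^2" using b4 c4 by (simp add: power2_eq_square)
      finally have "(2*a^4)^4 = (a^4)^2" using bc by simp
      then have "16*a^16 = a^8" by (simp add: power_mult_distrib flip: power_mult)
      then have "a^8*(16*a^8 - 1) = 0" by (simp add: algebra_simps flip: power_add)
      then have "16*a^8 = 1" using a0 by simp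
      then show ?thesis using a0 c4 dd bc by simp
    qed
  qed
qed


lemma suf_A: "a^8 = 1 \<Longrightarrow> eqs_plus a 0 0 (a^3)" for a :: "'k::field"
  unfolding eqs_plus_def apply (simp only: power_zero_numeral mult_zero_left mult_zero_right add_0 add_0_right diff_0_right simp_thms)
  by (intro conjI; (Groebner_Basis.algebra | simp add: power_mult_distrib flip: power_add power_mult))

lemma suf_B: "c^8 = 1 \<Longrightarrow> eqs_plus 0 (c^3) c 0" for c :: "'k::field"
  unfolding eqs_plus_def apply (simp only: power_zero_numeral mult_zero_left mult_zero_right add_0 add_0_right diff_0_right diff_0 simp_thms)
  by (intro conjI; (Groebner_Basis.algebra | simp add: power_mult_distrib flip: power_add power_mult))

lemma suf_C: "t^4 = -1 \<Longrightarrow> 16*a^8 = 1 \<Longrightarrow> eqs_plus a (-2*a^3*t^3) (t*a) (-2*a^3)" for a t :: "'k::field"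
  unfolding eqs_plus_def
  by (intro conjI; (Groebner_Basis.algebra | simp add: power_mult_distrib flip: power_add power_mult))

lemma z_facts:
  fixes z :: "'k::field" assumes "z^4 = -1"
  shows "z \<noteq> 0" "z^8 = 1" "z^5 = -z" "z^6 = -(z^2)" "z^7 = -(z^3)"
  using assms apply auto[1]
  using assms by Groebner_Basis.algebra+

lemma mu8:
  fixes z x :: "'k::field" assumes z: "z^4 = -1" and x: "x^8 = 1"
  shows "\<exists>k<8. x = z^k"
proof -
  have "(x - 1)*(x+1)*(x-z^2)*(x+z^2)*(x-z)*(x+z)*(x-z^3)*(x+z^3) = x^8 - 1"
    using z by Groebner_Basis.algebra
  then have "(x - 1)*(x+1)*(x-z^2)*(x+z^2)*(x-z)*(x+z)*(x-z^3)*(x+z^3) = 0" using x by simp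
  then have h: "x = 1 \<or> x = -1 \<or> x = z^2 \<or> x = -(z^2) \<or> x = z \<or> x = -z \<or> x = z^3 \<or> x = -(z^3)"
    by (simp only: mult_eq_0_iff eq_neg_iff_add_eq_0 right_minus_eq disj_assoc)
  have "x = z^0 \<or> x = z^4 \<or> x = z^2 \<or> x = z^6 \<or> x = z^1 \<or> x = z^5 \<or> x = z^3 \<or> x = z^7"
    using h z_facts[OF z] z by auto
  then show ?thesis
    apply (elim disjE)
    apply (rule_tac x=0 in exI, simp)
    apply (rule_tac x=4 in exI, simp)
    apply (rule_tac x=2 in exI, simp)
    apply (rule_tac x=6 in exI, simp)
    apply (rule_tac x=1 in exI, simp)
    apply (rule_tac x=5 in exI, simp)
    apply (rule_tac x=3 in exI, simp)
    apply (rule_tac x=7 in exI, simp)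
    done
qed

lemma neg1_eq_1: "(-1::'k::field) = 1 \<Longrightarrow> (2::'k) = 0"
  by (metis add.right_inverse one_add_one)

lemma zpow_ne1:
  fixes z :: "'k::field" assumes z: "z^4 = -1" and two: "(2::'k) \<noteq> 0" and m: "0 < m" "m < 8"
  shows "z^m \<noteq> 1"
proof
  assume h: "z^m = 1"
  have A: "(-1::'k)^m = 1"
  proof -
    have "(-1::'k)^m = (z^4)^m" using z by simp
    also have "\<dots> = (z^m)^4" by (simp flip: power_mult add: mult.commute)
    finally show ?thesis using h by simp
  qed
  have B: "(-1::'k)^(m div 2) = 1" if "even m"
  proof -
    have e: "4*(m div 2) = m*2" using that by presburger
    have "(-1::'k)^(m div 2) = (z^4)^(m div 2)" using z by simp
    also have "\<dots> = z^(4*(m div 2))" by (simp flip: power_mult)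
    also have "\<dots> = z^(m*2)" by (simp only: e)
    also have "\<dots> = (z^m)^2" by (rule power_mult)
    finally show ?thesis using h by simp
  qed
  have "m = 1 \<or> m = 2 \<or> m = 3 \<or> m = 4 \<or> m = 5 \<or> m = 6 \<or> m = 7" using m by auto
  moreover have C: "m = 4 \<Longrightarrow> (-1::'k) = 1" using h z by simp
  ultimately have "(-1::'k) = 1" using A B by (elim disjE; simp)
  then show False using two neg1_eq_1 by blast
qed

lemma zpow_inj:
  fixes z :: "'k::field" assumes z: "z^4 = -1" and two: "(2::'k) \<noteq> 0"
    and jk: "j < 8" "k < 8" and e: "z^j = z^k"
  shows "j = k"
proof (rule ccontr)
  assume "j \<noteq> k"
  then consider "j < k" | "k < j" by arith
  then show False
  proof cases
    case 1
    have "z^k = z^j * z^(k-j)" using 1 by (simp flip: power_add)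
    then have "z^(k-j) = 1" using e z_facts(1)[OF z] by simp
    then show False using zpow_ne1[OF z two, of "k-j"] 1 jk by simp
  next
    case 2
    have "z^j = z^k * z^(j-k)" using 2 by (simp flip: power_add)
    then have "z^(j-k) = 1" using e z_facts(1)[OF z] by simp
    then show False using zpow_ne1[OF z two, of "j-k"] 2 jk by simp
  qed
qed

definition Cmat :: "'k::field \<Rightarrow> 'k \<Rightarrow> 'k mat2" where
  "Cmat t a = (a, -2*a^3*t^3, t*a, -2*a^3)"

definition Eset :: "'k::field \<Rightarrow> 'k mat2 set" where
  "Eset z = (\<lambda>k. (z^k, 0, 0, z^(3*k))) ` {..<8} \<union> (\<lambda>k. (0, z^(3*k), z^k, 0)) ` {..<8}
     \<union> (\<lambda>(j,m). Cmat (z^(2*j+1)) (z^m / (z - z^3))) ` ({..<4} \<times> {..<8})"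


lemma wz_facts:
  fixes z :: "'k::field" assumes z: "z^4 = -1" and two: "(2::'k) \<noteq> 0"
  shows "(z - z^3)^2 = 2" "z - z^3 \<noteq> 0" "(z - z^3)^8 = 16"
proof -
  show w2: "(z - z^3)^2 = 2" using z by Groebner_Basis.algebra
  then show "z - z^3 \<noteq> 0" using two by auto
  have "(z - z^3)^8 = ((z - z^3)^2)^4" by (simp flip: power_mult)
  then show "(z - z^3)^8 = 16" using w2 by simp
qed

lemma zpow_8k: "z^4 = -1 \<Longrightarrow> (z^k)^8 = (1::'k::field)"
proof -
  assume z: "z^4 = -1"
  have "(z^k)^8 = (z^8)^k" by (metis power_mult mult.commute)
  then show ?thesis using z_facts(2)[OF z] by simp
qed



lemma S_plus_eq:
  fixes z :: "'k::field"
  assumes two: "(2::'k) \<noteq> 0" and five: "(5::'k) \<noteq> 0" and z: "z^4 = -1"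
  shows "curve_aut_set (f_plus::'k poly) = Eset z"
proof (intro equalityI subsetI)
  note zf = z_facts[OF z]
  note wf = wz_facts[OF z two]
  fix M :: "'k mat2" assume "M \<in> curve_aut_set f_plus"
  then obtain a b c d where M: "M = (a,b,c,d)" and D0: "a*d - b*c \<noteq> 0" and E: "eqs_plus a b c d"
    unfolding curve_aut_set_def mat2_det_def by (cases M) (auto simp: pres_plus)
  from nec_plus[OF two five E D0] consider
      "b = 0" "c = 0" "a^8 = 1" "d = a^3" | "a = 0" "d = 0" "c^8 = 1" "b = c^3"
    | "a \<noteq> 0" "c^4 = -(a^4)" "16*a^8 = 1" "d = -2*a^3" "b*c = 2*a^4" by blast
  then show "M \<in> Eset z"
  proof cases
    case 1
    obtain k where k: "k < 8" "a = z^k" using mu8[OF z 1(3)] by blast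
    have "(z^k)^3 = z^(3*k)" by (simp add: power_mult mult.commute)
    then have "M = (z^k, 0, 0, z^(3*k))" using M 1 k by simp
    then show ?thesis unfolding Eset_def using k by blast
  next
    case 2
    obtain k where k: "k < 8" "c = z^k" using mu8[OF z 2(3)] by blast
    have "(z^k)^3 = z^(3*k)" by (simp add: power_mult mult.commute)
    then have "M = (0, z^(3*k), z^k, 0)" using M 2 k by simp
    then show ?thesis unfolding Eset_def using k by blast
  next
    case 3
    define t where "t = c / a"
    have ct: "c = t * a" using 3(1) unfolding t_def by simp
    have t4: "t^4 = -1" using 3(1,2) unfolding t_def by (simp add: power_divide)
    have "t^8 = 1" using t4 by Groebner_Basis.algebra
    then obtain k where k: "k < 8" "t = z^k" using mu8[OF z] by blast
    have "odd k"
    proof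
      assume "even k"
      then obtain i where "k = 2*i" by blast
      then have "t^4 = (z^8)^i" using k by (simp flip: power_mult add: mult.commute)
      then have "(-1::'k) = 1" using t4 zf by simp
      then show False using two neg1_eq_1 by blast
    qed
    then obtain j where j: "k = 2*j+1" by (metis oddE)
    have j4: "j < 4" using j k by simp
    have "(a * (z - z^3))^8 = 1" using 3(3) wf(3) by (simp add: power_mult_distrib mult.commute)
    then obtain m where m: "m < 8" "a * (z - z^3) = z^m" using mu8[OF z] by blast
    have am: "a = z^m / (z - z^3)" using m wf(2) by (simp add: field_simps)
    have "a*(b*t - 2*a^3) = 0" using 3(5) ct by Groebner_Basis.algebra
    then have "b*t = 2*a^3" using 3(1) by simp
    then have bt: "b = -2*a^3*t^3" using t4 by Groebner_Basis.algebra
    have "M = Cmat t a"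
      using M bt ct 3(4) unfolding Cmat_def by simp
    then have "M = Cmat (z^(2*j+1)) (z^m / (z - z^3))"
      using k(2) j am by simp
    then show ?thesis unfolding Eset_def using j4 m(1) by (intro UnI2 rev_image_eqI[of "(j,m)"]) auto
  qed
next
  note zf = z_facts[OF z]
  note wf = wz_facts[OF z two]
  fix M :: "'k mat2" assume "M \<in> Eset z"
  then consider (A) k where "k < 8" "M = (z^k, 0, 0, z^(3*k))" | (B) k where "k < 8" "M = (0, z^(3*k), z^k, 0)"
    | (C) j m where "j < 4" "m < 8" "M = Cmat (z^(2*j+1)) (z^m / (z - z^3))"
    unfolding Eset_def by (elim UnE imageE; force)
  then show "M \<in> curve_aut_set f_plus"
  proof cases
    case A
    have e: "z^(3*k) = (z^k)^3" by (simp add: power_mult mult.commute)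
    show ?thesis unfolding curve_aut_set_def mat2_det_def A(2) e
      using suf_A[OF zpow_8k[OF z]] zf(1) by (simp add: pres_plus)
  next
    case B
    have e: "z^(3*k) = (z^k)^3" by (simp add: power_mult mult.commute)
    show ?thesis unfolding curve_aut_set_def mat2_det_def B(2) e
      using suf_B[OF zpow_8k[OF z]] zf(1) by (simp add: pres_plus)
  next
    case C
    define t where "t = z^(2*j+1)"
    define a where "a = z^m / (z - z^3)"
    have e4: "(2*j+1)*4 = 8*j + 4" by simp
    have "t^4 = z^(8*j+4)" unfolding t_def by (metis power_mult e4)
    also have "\<dots> = (z^8)^j * z^4" by (simp add: power_add power_mult)
    finally have t4: "t^4 = -1" using zf(2) z by simp
    have w16: "(16::'k) \<noteq> 0" using wf(2,3) by (metis power_not_zero)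
    have a8: "16*a^8 = 1" unfolding a_def using zpow_8k[OF z] wf w16 by (simp add: power_divide)
    have a0: "a \<noteq> 0" unfolding a_def using zf(1) wf(2) by simp
    have det: "a * (-2*a^3) - (-2*a^3*t^3) * (t*a) = -4*a^4" using t4 by Groebner_Basis.algebra
    have four: "(4::'k) \<noteq> 0" using two by (metis mult_eq_0_iff num_double numeral_times_numeral)
    show ?thesis unfolding curve_aut_set_def mat2_det_def C(3) Cmat_def t_def[symmetric] a_def[symmetric]
      using suf_C[OF t4 a8] det four a0 by (simp add: pres_plus)
  qed
qed



lemma Eset_card:
  fixes z :: "'k::field"
  assumes two: "(2::'k) \<noteq> 0" and z: "z^4 = -1"
  shows "card (Eset z) = 48"
proof -
  note zf = z_facts[OF z]
  note wf = wz_facts[OF z two]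
  have injz: "inj_on (\<lambda>k. z^k) {..<8}" by (auto intro!: inj_onI zpow_inj[OF z two])
  let ?A = "(\<lambda>k. (z^k, 0::'k, 0::'k, z^(3*k))) ` {..<8}"
  let ?B = "(\<lambda>k. (0::'k, z^(3*k), z^k, 0::'k)) ` {..<8}"
  let ?C = "(\<lambda>(j,m). Cmat (z^(2*j+1)) (z^m / (z - z^3))) ` ({..<4::nat} \<times> {..<8::nat})"
  have cA: "card ?A = 8"
    by (subst card_image) (auto intro!: inj_onI zpow_inj[OF z two])
  have cB: "card ?B = 8"
    by (subst card_image) (auto intro!: inj_onI zpow_inj[OF z two])
  have injC: "inj_on (\<lambda>(j,m). Cmat (z^(2*j+1)) (z^m / (z - z^3))) ({..<4::nat} \<times> {..<8::nat})"
  proof (rule inj_onI, clarify)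
    fix j m j' m' :: nat
    assume jm: "j < 4" "m < 8" "j' < 4" "m' < 8"
      and e: "Cmat (z^(2*j+1)) (z^m / (z - z^3)) = Cmat (z^(2*j'+1)) (z^m' / (z - z^3))"
    from e have e1: "z^m / (z - z^3) = z^m' / (z - z^3)" unfolding Cmat_def by simp
    then have "z^m = z^m'" using wf(2) by (simp add: divide_cancel_right)
    then have mm: "m = m'" using zpow_inj[OF z two] jm by blast
    from e have "z^(2*j+1) * (z^m / (z - z^3)) = z^(2*j'+1) * (z^m' / (z - z^3))" unfolding Cmat_def by simp
    then have ee: "z^(2*j+1) = z^(2*j'+1)" using mm wf(2) zf(1) by simp
    have "2*j+1 = 2*j'+1"
      apply (rule zpow_inj[OF z two])
      using jm apply simp
      using jm apply simp
      by (rule ee)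
    then show "j = j' \<and> m = m'" using mm by simp
  qed
  have cC: "card ?C = 32" using card_image[OF injC] by simp
  have dAB: "?A \<inter> ?B = {}" using zf(1) by auto
  have dABC: "(?A \<union> ?B) \<inter> ?C = {}" unfolding Cmat_def using zf(1) wf(2) by auto
  have "card (Eset z) = card (?A \<union> ?B) + card ?C"
    unfolding Eset_def by (rule card_Un_disjoint[OF _ _ dABC]) auto
  also have "card (?A \<union> ?B) = 16" using card_Un_disjoint[of ?A ?B] dAB cA cB by simp
  finally show ?thesis using cC by simp
qed

lemma map_Eset: "mat2_map to_ac ` Eset (z::'k::field) = Eset (to_ac z)"
  unfolding Eset_def image_Un image_image
  by (simp add: mat2_map_def Cmat_def case_prod_beta)



lemma five_facts:
  assumes f: "(5::'k::field) = 0"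
  shows "(2::'k) \<noteq> 0" "(3::'k) \<noteq> 0" "(4::'k) \<noteq> 0"
proof -
  show "(2::'k) \<noteq> 0"
  proof
    assume h: "(2::'k) = 0"
    have e: "(1::'k) = 5 - 2*2" by simp
    then show False by (simp add: h f)
  qed
  show "(3::'k) \<noteq> 0"
  proof
    assume h: "(3::'k) = 0"
    have e: "(1::'k) = 2*5 - 3*3" by simp
    then show False by (simp add: h f)
  qed
  show "(4::'k) \<noteq> 0"
  proof
    assume h: "(4::'k) = 0"
    have e: "(1::'k) = 5 - 4" by simp
    then show False by (simp add: h f)
  qed
qed

lemma of_nat_mod5: "(5::'k::field) = 0 \<Longrightarrow> (of_nat (n mod 5) :: 'k) = of_nat n"
proof -
  assume f: "(5::'k) = 0"
  have "(of_nat n :: 'k) = of_nat (n mod 5 + 5 * (n div 5))" by simp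
  also have "\<dots> = of_nat (n mod 5)" using f by (simp only: of_nat_add of_nat_mult) simp
  finally show ?thesis by simp
qed

lemma f5_pow: "(5::'k::field) = 0 \<Longrightarrow> n < 5 \<Longrightarrow> (of_nat n :: 'k)^5 = of_nat n"
proof -
  assume f: "(5::'k) = 0" and n: "n < 5"
  then have "n = 0 \<or> n = 1 \<or> n = 2 \<or> n = 3 \<or> n = 4" by auto
  then have nm: "n^5 mod 5 = n" by auto
  have "(of_nat n :: 'k)^5 = of_nat (n^5)" by simp
  also have "\<dots> = of_nat (n^5 mod 5)" using of_nat_mod5[OF f] by simp
  finally show ?thesis using nm by simp
qed

lemma f5_roots:
  assumes f: "(5::'k::field) = 0" and x: "x^5 = x"
  shows "\<exists>n<5. x = (of_nat n :: 'k)"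
proof -
  have i: "x*(x-1)*(x-2)*(x-3)*(x-4) = x^5 - 10*x^4 + 35*x^3 - 50*x^2 + 24*x" by Groebner_Basis.algebra
  have "(10::'k) = 2*5" "(35::'k) = 7*5" "(50::'k) = 10*5" "(24::'k) = 5*5 - 1" by simp_all
  then have "(10::'k) = 0" "(35::'k) = 0" "(50::'k) = 0" "(24::'k) = -1" using f by simp_all
  then have "x*(x-1)*(x-2)*(x-3)*(x-4) = x^5 - x" using i by simp
  then have "x*(x-1)*(x-2)*(x-3)*(x-4) = 0" using x by simp
  then have "x = of_nat 0 \<or> x = of_nat 1 \<or> x = of_nat 2 \<or> x = of_nat 3 \<or> x = of_nat 4"
    by (simp only: mult_eq_0_iff right_minus_eq) simp
  then show ?thesis
    apply (elim disjE)
    apply (rule_tac x=0 in exI, simp)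
    apply (rule_tac x=1 in exI, simp)
    apply (rule_tac x=2 in exI, simp)
    apply (rule_tac x=3 in exI, simp)
    apply (rule_tac x=4 in exI, simp)
    done
qed

lemma f5_ne0: "(5::'k::field) = 0 \<Longrightarrow> 0 < k \<Longrightarrow> k < 5 \<Longrightarrow> (of_nat k :: 'k) \<noteq> 0"
proof -
  assume f: "(5::'k) = 0" and k: "0 < k" "k < 5"
  then have "k = 1 \<or> k = 2 \<or> k = 3 \<or> k = 4" by auto
  then show ?thesis using five_facts[OF f] by auto
qed

lemma f5_inj_aux: "(5::'k::field) = 0 \<Longrightarrow> m < n \<Longrightarrow> n < 5 \<Longrightarrow> (of_nat m :: 'k) \<noteq> of_nat n"
proof
  assume f: "(5::'k) = 0" and mn: "m < n" "n < 5" and e: "(of_nat m :: 'k) = of_nat n"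
  have ne: "(of_nat (n - m) :: 'k) \<noteq> 0" by (rule f5_ne0[OF f]) (use mn in auto)
  have "(of_nat (n - m) :: 'k) = of_nat n - of_nat m" using mn by (intro of_nat_diff) simp
  also have "\<dots> = 0" using e by simp
  finally show False using ne by blast
qed

lemma f5_inj: "(5::'k::field) = 0 \<Longrightarrow> m < 5 \<Longrightarrow> n < 5 \<Longrightarrow> (of_nat m :: 'k) = of_nat n \<Longrightarrow> m = n"
proof (cases rule: linorder_cases[of m n])
  case less
  assume "(5::'k::field) = 0" "m < 5" "n < 5" "(of_nat m :: 'k) = of_nat n"
  then show ?thesis using f5_inj_aux[OF _ less] by blast
next
  case greater
  assume "(5::'k::field) = 0" "m < 5" "n < 5" "(of_nat m :: 'k) = of_nat n"
  then show ?thesis using f5_inj_aux[OF _ greater] by metis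
qed

definition dn5 :: "nat \<Rightarrow> nat \<Rightarrow> nat \<Rightarrow> nat" where
 "dn5 n0 n1 n2 = (if n0 < 5 then (n2 + 25 - n1*n0) mod 5 else (5 - n1) mod 5)"

definition J5 :: "(nat \<times> nat \<times> nat) set" where
 "J5 = Set.filter (\<lambda>(n0,n1,n2). dn5 n0 n1 n2 \<noteq> 0) ({..<6} \<times> {..<5} \<times> {..<5})"

lemma card_J5: "card J5 = 120"
  unfolding J5_def dn5_def by code_simp

definition sq5 :: "'k::field \<Rightarrow> 'k \<Rightarrow> nat \<Rightarrow> 'k" where
 "sq5 z s n = (if n = 1 then 1 else if n = 2 then s else if n = 3 then s*z^2 else 2)"

definition ca5 :: "nat \<Rightarrow> 'k::field" where "ca5 n0 = (if n0 < 5 then 1 else 0)"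
definition cc5 :: "nat \<Rightarrow> 'k::field" where "cc5 n0 = (if n0 < 5 then of_nat n0 else 1)"

definition E5mat :: "'k::field \<Rightarrow> 'k \<Rightarrow> (nat \<times> nat \<times> nat) \<times> bool \<Rightarrow> 'k mat2" where
 "E5mat z s = (\<lambda>((n0,n1,n2),\<sigma>). let \<alpha> = (if \<sigma> then -1 else 1) * sq5 z s (dn5 n0 n1 n2)
    in (\<alpha> * ca5 n0, \<alpha> * of_nat n1, \<alpha> * cc5 n0, \<alpha> * of_nat n2))"

definition E5 :: "'k::field \<Rightarrow> 'k \<Rightarrow> 'k mat2 set" where
 "E5 z s = E5mat z s ` (J5 \<times> {True, False})"

lemma dn5_lt: "dn5 n0 n1 n2 < 5" unfolding dn5_def by auto

lemma of_nat_dn5: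
  assumes f: "(5::'k::field) = 0" and n: "n0 < 6" "n1 < 5" "n2 < 5"
  shows "(of_nat (dn5 n0 n1 n2) :: 'k) = ca5 n0 * of_nat n2 - of_nat n1 * cc5 n0"
proof (cases "n0 < 5")
  case True
  have le: "n1*n0 \<le> n2 + 25"
  proof -
    have "n1*n0 \<le> 4*4" using True n by (intro mult_mono) auto
    then show ?thesis by simp
  qed
  have "(of_nat (dn5 n0 n1 n2) :: 'k) = of_nat (n2 + 25 - n1*n0)"
    unfolding dn5_def using True of_nat_mod5[OF f] by simp
  also have "\<dots> = of_nat n2 + 25 - of_nat n1 * of_nat n0" using le by (simp add: of_nat_diff)
  also have "(25::'k) = 5*5" by simp
  finally show ?thesis using True f unfolding ca5_def cc5_def by simp
next
  case False
  have "(of_nat (dn5 n0 n1 n2) :: 'k) = of_nat (5 - n1)"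
    unfolding dn5_def using False of_nat_mod5[OF f] by simp
  also have "\<dots> = 5 - of_nat n1" using n by (simp add: of_nat_diff)
  finally show ?thesis using False f unfolding ca5_def cc5_def by simp
qed

lemma sq5_facts:
  fixes z s :: "'k::field"
  assumes f: "(5::'k) = 0" and z: "z^4 = -1" and s: "s^2 = 2" and n: "0 < n" "n < 5"
  shows "(sq5 z s n)^2 = of_nat n" "sq5 z s n \<noteq> 0"
proof -
  have "n = 1 \<or> n = 2 \<or> n = 3 \<or> n = 4" using n by auto
  moreover have "(s*z^2)^2 = (3::'k)"
  proof -
    have "(s*z^2)^2 = s^2 * z^4" by (simp add: power_mult_distrib flip: power_mult)
    also have "\<dots> = -2" using s z by simp
    also have "(-2::'k) = 3 - 5" by simp
    finally show ?thesis using f by simp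
  qed
  ultimately show sq: "(sq5 z s n)^2 = of_nat n" unfolding sq5_def using s by auto
  show "sq5 z s n \<noteq> 0"
  proof
    assume "sq5 z s n = 0"
    then have "(of_nat n :: 'k) = 0" using sq by simp
    then show False using f5_ne0[OF f] n by blast
  qed
qed

lemma sqrt_pm: "(x::'k::field)^2 = r^2 \<Longrightarrow> x = r \<or> x = -r"
proof -
  assume "x^2 = r^2"
  then have "(x - r)*(x + r) = 0" by (simp add: algebra_simps power2_eq_square)
  then show ?thesis by (auto simp: eq_neg_iff_add_eq_0)
qed

lemma suf5:
  fixes a b c d al :: "'k::field"
  assumes f: "(5::'k) = 0" and p: "a^5 = a" "b^5 = b" "c^5 = c" "d^5 = d" and al: "al^2 = a*d - b*c"
  shows "eqs_minus (al*a) (al*b) (al*c) (al*d)"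
proof -
  have t: "(10::'k) = 0" using f by (metis mult_zero_right num_double numeral_times_numeral)
  have e0: "(al*b)^5*(al*d) - (al*b)*(al*d)^5 = al^6 * (b^5*d - b*d^5)" by Groebner_Basis.algebra
  have e1: "(al*b)^5*(al*c) - (al*a)*(al*d)^5 = al^6 * (b^5*c - a*d^5)" by Groebner_Basis.algebra
  have e5: "(al*a)^5*(al*d) - (al*b)*(al*c)^5 = al^6 * (a^5*d - b*c^5)" by Groebner_Basis.algebra
  have e6: "(al*a)^5*(al*c) - (al*a)*(al*c)^5 = al^6 * (a^5*c - a*c^5)" by Groebner_Basis.algebra
  have D: "(al*a)*(al*d) - (al*b)*(al*c) = al^2 * (a*d - b*c)" by Groebner_Basis.algebra
  define DD where "DD = a*d - b*c"
  have "al^6 = (al^2)^3" by (simp flip: power_mult)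
  then have a6: "al^6 = DD^3" using al unfolding DD_def by simp
  have "al^6 * (b^5*c - a*d^5) = DD^3 * (-DD)" using p a6 unfolding DD_def by simp
  also have "\<dots> = - ((al^2 * (a*d - b*c))^2)" unfolding DD_def[symmetric] al by (simp add: eval_nat_numeral mult_ac)
  finally have r1: "al^6 * (b^5*c - a*d^5) = - ((al^2 * (a*d - b*c))^2)" .
  have "al^6 * (a^5*d - b*c^5) = DD^3 * DD" using p a6 unfolding DD_def by simp
  also have "\<dots> = (al^2 * (a*d - b*c))^2" unfolding DD_def[symmetric] al by (simp add: eval_nat_numeral mult_ac)
  finally have r5: "al^6 * (a^5*d - b*c^5) = (al^2 * (a*d - b*c))^2" .
  have z0: "b^5*d - b*d^5 = 0" "a^5*c - a*c^5 = 0" using p by simp_all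
  show ?thesis unfolding eqs_minus_def f t
    apply (simp only: mult_zero_left mult_zero_right add_0 add_0_right diff_0_right diff_zero)
    by (simp only: e0 e1 e5 e6 D r1 r5 z0 mult_zero_right)
qed

lemma ca5_pow: "(ca5 n0 :: 'k::field)^5 = ca5 n0" unfolding ca5_def by simp
lemma cc5_pow: assumes f: "(5::'k::field) = 0" shows "(cc5 n0 :: 'k)^5 = cc5 n0"
  unfolding cc5_def using f5_pow[OF f, of n0] by simp

lemma E5_sub:
  fixes z s :: "'k::field"
  assumes f: "(5::'k) = 0" and z: "z^4 = -1" and s: "s^2 = 2"
  shows "E5 z s \<subseteq> curve_aut_set (f_minus::'k poly)"
proof
  fix M assume "M \<in> E5 z s"
  then obtain n0 n1 n2 \<sigma> where J: "(n0,n1,n2) \<in> J5" and M: "M = E5mat z s ((n0,n1,n2),\<sigma>)"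
    unfolding E5_def by auto
  define dn where "dn = dn5 n0 n1 n2"
  from J have n: "n0 < 6" "n1 < 5" "n2 < 5" "dn \<noteq> 0" unfolding J5_def dn_def by auto
  have dn5: "0 < dn" "dn < 5" using n(4) dn5_lt unfolding dn_def by auto
  define al where "al = (if \<sigma> then -1 else 1) * sq5 z s dn"
  have al2: "al^2 = of_nat dn" unfolding al_def using sq5_facts(1)[OF f z s dn5] by simp
  have al0: "al \<noteq> 0" unfolding al_def using sq5_facts(2)[OF f z s dn5] by simp
  have dd: "(of_nat dn :: 'k) = ca5 n0 * of_nat n2 - of_nat n1 * cc5 n0"
    unfolding dn_def by (rule of_nat_dn5[OF f n(1-3)])
  have dn0: "(of_nat dn :: 'k) \<noteq> 0" using f5_ne0[OF f dn5] .
  have M': "M = (al * ca5 n0, al * of_nat n1, al * cc5 n0, al * of_nat n2)"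
    unfolding M E5mat_def al_def dn_def by (simp add: Let_def)
  have E: "eqs_minus (al * ca5 n0) (al * of_nat n1) (al * cc5 n0) (al * (of_nat n2 :: 'k))"
    by (rule suf5[OF f ca5_pow f5_pow[OF f n(2)] cc5_pow[OF f] f5_pow[OF f n(3)]]) (use al2 dd in simp)
  have det: "(al * ca5 n0) * (al * of_nat n2) - (al * of_nat n1) * (al * cc5 n0) = al^2 * of_nat dn"
    unfolding dd by (simp add: algebra_simps power2_eq_square)
  show "M \<in> curve_aut_set f_minus"
    unfolding curve_aut_set_def mat2_det_def M' using E det al0 dn0 by (simp add: pres_minus)
qed

lemma S5_sub:
  fixes z s :: "'k::field"
  assumes f: "(5::'k) = 0" and z: "z^4 = -1" and s: "s^2 = 2"
  shows "curve_aut_set (f_minus::'k poly) \<subseteq> E5 z s"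
proof
  have t: "(10::'k) = 0" using f by (metis mult_zero_right num_double numeral_times_numeral)
  fix M assume "M \<in> curve_aut_set (f_minus::'k poly)"
  then obtain a b c d where M: "M = (a,b,c,d)" and D0: "a*d - b*c \<noteq> 0" and E: "eqs_minus a b c d"
    unfolding curve_aut_set_def mat2_det_def by (cases M) (auto simp: pres_minus)
  have E': "b^5*d - b*d^5 = 0 \<and> b^5*c - a*d^5 = -((a*d-b*c)^2) \<and>
            a^5*d - b*c^5 = (a*d-b*c)^2 \<and> a^5*c - a*c^5 = 0"
    using E unfolding eqs_minus_def f t
    by (simp only: mult_zero_left mult_zero_right add_0 add_0_right diff_0_right diff_zero simp_thms)
  then have E0: "b^5*d = b*d^5" and E1: "b^5*c - a*d^5 = -((a*d-b*c)^2)"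
    and E5: "a^5*d - b*c^5 = (a*d-b*c)^2" and E6: "a^5*c = a*c^5" by auto
  obtain n0 al where n0: "n0 < 6" and al0: "al \<noteq> 0" and ac: "a = al * ca5 n0" "c = al * cc5 n0"
  proof (cases "a = 0")
    case True
    then have "c \<noteq> 0" using D0 by auto
    then show ?thesis using that[of 5 c] True unfolding ca5_def cc5_def by simp
  next
    case False
    have "(c/a)^5 = c/a" using E6 False by (simp add: power_divide field_simps)
    then obtain n where n: "n < 5" "c/a = of_nat n" using f5_roots[OF f] by blast
    show ?thesis using that[of n a] False n unfolding ca5_def cc5_def by (simp add: field_simps)
  qed
  obtain be b0 d0 where be0: "be \<noteq> 0" and bd: "b = be * b0" "d = be * d0" and p: "b0^5 = b0" "d0^5 = d0"
  proof (cases "d = 0")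
    case True
    then have "b \<noteq> 0" using D0 by auto
    then show ?thesis using that[of b 1 0] True by simp
  next
    case False
    have "(b/d)^5 = b/d" using E0 False by (simp add: power_divide field_simps)
    then show ?thesis using that[of d "b/d" 1] False by simp
  qed
  define a0 :: 'k where "a0 = ca5 n0"
  define c0 :: 'k where "c0 = cc5 n0"
  have pa: "a0^5 = a0" "c0^5 = c0" unfolding a0_def c0_def using ca5_pow cc5_pow[OF f] by auto
  define DD where "DD = a0*d0 - b0*c0"
  have Deq: "a*d - b*c = al*be*DD" unfolding DD_def using ac bd a0_def c0_def by (simp add: algebra_simps)
  have DD0: "DD \<noteq> 0" using Deq D0 by auto
  have "a^5*d - b*c^5 = al^5*be*(a0^5*d0 - b0*c0^5)" using ac bd a0_def c0_def
    by (simp add: algebra_simps power_mult_distrib)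
  then have "a^5*d - b*c^5 = al^5*be*DD" using pa unfolding DD_def by simp
  then have h5: "al^5*be*DD = (al*be*DD)^2" using E5 Deq by simp
  have "al^2*be*DD*(al^3 - be*DD) = al^5*be*DD - (al*be*DD)^2"
    by (simp add: algebra_simps eval_nat_numeral)
  then have "al^2*be*DD*(al^3 - be*DD) = 0" using h5 by simp
  then have r1: "al^3 = be*DD" using al0 be0 DD0 by simp
  have "b^5*c - a*d^5 = al*be^5*(b0^5*c0 - a0*d0^5)" using ac bd a0_def c0_def
    by (simp add: algebra_simps power_mult_distrib)
  then have "b^5*c - a*d^5 = -(al*be^5*DD)" using p pa unfolding DD_def by (simp add: algebra_simps)
  then have h1: "al*be^5*DD = (al*be*DD)^2" using E1 Deq by simp
  have "al*be^2*DD*(be^3 - al*DD) = al*be^5*DD - (al*be*DD)^2"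
    by (simp add: algebra_simps eval_nat_numeral)
  then have "al*be^2*DD*(be^3 - al*DD) = 0" using h1 by simp
  then have r2: "be^3 = al*DD" using al0 be0 DD0 by simp
  define ep where "ep = be / al"
  have bep: "be = ep * al" unfolding ep_def using al0 by simp
  have al2: "al^2 = ep * DD" using r1 al0 unfolding ep_def by (simp add: field_simps eval_nat_numeral)
  have "ep^3 * al^3 = al * DD" using r2 bep by (simp add: power_mult_distrib)
  then have "al * (ep^3 * al^2 - DD) = 0" by (simp add: algebra_simps eval_nat_numeral)
  then have "ep^3 * al^2 = DD" using al0 by simp
  then have "ep^3 * (ep*DD) = DD" using al2 by simp
  then have "DD * (ep^4 - 1) = 0" by (simp add: algebra_simps eval_nat_numeral)
  then have ep4: "ep^4 = 1" using DD0 by simp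
  have ep5: "ep^5 = ep" using ep4 by (simp add: eval_nat_numeral)
  have "(ep*b0)^5 = ep*b0" using ep5 p by (simp add: power_mult_distrib)
  then obtain n1 where n1: "n1 < 5" "ep*b0 = of_nat n1" using f5_roots[OF f] by blast
  have "(ep*d0)^5 = ep*d0" using ep5 p by (simp add: power_mult_distrib)
  then obtain n2 where n2: "n2 < 5" "ep*d0 = of_nat n2" using f5_roots[OF f] by blast
  have Mal: "M = (al * ca5 n0, al * of_nat n1, al * cc5 n0, al * of_nat n2)"
    using M ac bd bep n1 n2 by (simp add: algebra_simps)
  define dn where "dn = dn5 n0 n1 n2"
  have "(of_nat dn :: 'k) = a0 * of_nat n2 - of_nat n1 * c0"
    unfolding dn_def a0_def c0_def by (rule of_nat_dn5[OF f n0 n1(1) n2(1)])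
  also have "\<dots> = ep * DD" unfolding DD_def using n1 n2 by (simp flip: n1(2) n2(2) add: algebra_simps)
  finally have dnal: "(of_nat dn :: 'k) = al^2" using al2 by simp
  have dn0: "dn \<noteq> 0"
  proof
    assume "dn = 0"
    then have "al^2 = 0" using dnal by simp
    then show False using al0 by simp
  qed
  have dn5: "0 < dn" "dn < 5" using dn0 dn5_lt unfolding dn_def by auto
  have J: "(n0,n1,n2) \<in> J5" unfolding J5_def using n0 n1 n2 dn0 unfolding dn_def by auto
  have "al^2 = (sq5 z s dn)^2" using dnal sq5_facts(1)[OF f z s dn5] by simp
  then have "al = sq5 z s dn \<or> al = - sq5 z s dn" by (rule sqrt_pm)
  then obtain \<sigma> where sg: "al = (if \<sigma> then -1 else 1) * sq5 z s dn" by (metis mult_1 mult_minus1)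
  have "M = E5mat z s ((n0,n1,n2),\<sigma>)" unfolding Mal E5mat_def using sg unfolding dn_def by (simp add: Let_def)
  then show "M \<in> E5 z s" unfolding E5_def using J by auto
qed

lemma E5_card:
  fixes z s :: "'k::field"
  assumes f: "(5::'k) = 0" and z: "z^4 = -1" and s: "s^2 = 2"
  shows "card (E5 z s) = 240"
proof -
  have two: "(2::'k) \<noteq> 0" using five_facts[OF f] by simp
  have inj: "inj_on (E5mat z s) (J5 \<times> {True, False})"
  proof (rule inj_onI)
    fix x y assume x: "x \<in> J5 \<times> {True, False}" and y: "y \<in> J5 \<times> {True, False}"
      and e0: "E5mat z s x = E5mat z s y"
    obtain n0 n1 n2 \<sigma> where xx: "x = ((n0,n1,n2),\<sigma>)" by (metis prod.collapse)
    obtain m0 m1 m2 \<tau> where yy: "y = ((m0,m1,m2),\<tau>)" by (metis prod.collapse)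
    have J: "(n0,n1,n2) \<in> J5" "(m0,m1,m2) \<in> J5" using x y xx yy by auto
    have e: "E5mat z s ((n0,n1,n2),\<sigma>) = E5mat z s ((m0,m1,m2),\<tau>)" using e0 xx yy by simp
    define dn where "dn = dn5 n0 n1 n2"
    define dm where "dm = dn5 m0 m1 m2"
    from J have n: "n0 < 6" "n1 < 5" "n2 < 5" "dn \<noteq> 0" "m0 < 6" "m1 < 5" "m2 < 5" "dm \<noteq> 0"
      unfolding J5_def dn_def dm_def by auto
    have dn5: "0 < dn" "dn < 5" "0 < dm" "dm < 5" using n dn5_lt unfolding dn_def dm_def by auto
    define al where "al = (if \<sigma> then -1 else 1) * sq5 z s dn"
    define be where "be = (if \<tau> then -1 else 1) * sq5 z s dm"
    have al0: "al \<noteq> 0" unfolding al_def using sq5_facts(2)[OF f z s dn5(1,2)] by simp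
    have be0: "be \<noteq> 0" unfolding be_def using sq5_facts(2)[OF f z s dn5(3,4)] by simp
    from e have c1: "al * ca5 n0 = be * ca5 m0" and c2: "al * of_nat n1 = be * (of_nat m1::'k)"
      and c3: "al * cc5 n0 = be * cc5 m0" and c4: "al * of_nat n2 = be * (of_nat m2::'k)"
      unfolding E5mat_def al_def be_def dn_def dm_def by (simp_all add: Let_def)
    have albe: "al = be \<and> n0 = m0"
    proof (cases "n0 < 5")
      case True
      then have "m0 < 5" using c1 al0 unfolding ca5_def by (auto split: if_splits)
      then have "al = be" using c1 True unfolding ca5_def by simp
      moreover have "n0 = m0"
        using c3 True \<open>m0 < 5\<close> \<open>al = be\<close> al0 f5_inj[OF f True \<open>m0 < 5\<close>] unfolding cc5_def by simp
      ultimately show ?thesis by simp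
    next
      case False
      then have "\<not> m0 < 5" using c1 be0 unfolding ca5_def by (auto split: if_splits)
      then have "al = be" using c3 False unfolding cc5_def by simp
      moreover have "n0 = m0" using False \<open>\<not> m0 < 5\<close> n by simp
      ultimately show ?thesis by simp
    qed
    then have n1: "n1 = m1" and n2: "n2 = m2" using c2 c4 al0 f5_inj[OF f] n by auto
    then have "dn = dm" unfolding dn_def dm_def using albe by simp
    then have "(if \<sigma> then -1 else 1) * sq5 z s dn = (if \<tau> then -1 else 1) * sq5 z s dn"
      using albe unfolding al_def be_def by simp
    then have "\<sigma> = \<tau>" using sq5_facts(2)[OF f z s dn5(1,2)] two
      by (auto split: if_splits simp: neg_equal_iff_equal)
    then show "x = y" using albe n1 n2 xx yy by simp
  qed
  have "card (E5 z s) = card (J5 \<times> {True, False})" unfolding E5_def by (rule card_image[OF inj])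
  also have "\<dots> = 240" using card_J5 by (simp add: card_cartesian_product)
  finally show ?thesis .
qed

lemma map_E5: "mat2_map to_ac ` E5 (z::'k::field) s = E5 (to_ac z) (to_ac s)"
  unfolding E5_def image_image
  by (rule image_cong) (auto simp: mat2_map_def E5mat_def Let_def sq5_def ca5_def cc5_def)



lemma fermat_ff:
  fixes x :: "'a::{field,finite}"
  assumes x: "x \<noteq> 0"
  shows "x ^ (card (UNIV::'a set) - 1) = 1"
proof -
  let ?U = "UNIV - {0::'a}"
  have bij: "bij_betw (\<lambda>y. x*y) ?U ?U"
    by (rule bij_betwI[where g="\<lambda>y. y/x"]) (use x in auto)
  have cU: "card ?U = card (UNIV::'a set) - 1" by (simp add: card_Diff_singleton)
  have "(\<Prod>y\<in>?U. y) = (\<Prod>y\<in>?U. x*y)" using prod.reindex_bij_betw[OF bij, of "\<lambda>y. y"] by simp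
  also have "\<dots> = x^card ?U * (\<Prod>y\<in>?U. y)" by (simp add: prod.distrib)
  finally have "(\<Prod>y\<in>?U. y) * (x^card ?U - 1) = 0" by (simp add: algebra_simps)
  moreover have "(\<Prod>y\<in>?U. y) \<noteq> 0" by simp
  ultimately show ?thesis using cU by simp
qed

lemma exists_z8:
  fixes q :: nat
  assumes card: "card (UNIV :: 'a::{field,finite} set) = q" and dv: "8 dvd (q - 1)"
  shows "\<exists>z::'a. z^4 = -1"
proof -
  define m where "m = (q - 1) div 2"
  have "card {0::'a,1} \<le> card (UNIV::'a set)" by (rule card_mono) auto
  then have q2: "q \<ge> 2" using card by simp
  have q1: "q - 1 = 2*m" using dv unfolding m_def by auto
  have m0: "m > 0" using q1 dv q2 by auto
  have "\<exists>x::'a. x \<noteq> 0 \<and> x^m \<noteq> 1"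
  proof (rule ccontr)
    assume "\<not> ?thesis"
    then have all: "\<And>x::'a. x \<noteq> 0 \<Longrightarrow> x^m = 1" by blast
    let ?P = "monom (1::'a) m - 1"
    have "coeff ?P 0 = -1" using m0 by (simp add: coeff_monom)
    then have P0: "?P \<noteq> 0"
    proof (intro notI)
      assume c: "coeff ?P 0 = -1" and h: "?P = 0"
      have "coeff ?P 0 = coeff 0 0" using h by (rule arg_cong)
      then show False using c by simp
    qed
    have dP: "degree ?P \<le> m" by (intro degree_diff_le) (auto simp: degree_monom_le)
    have "UNIV - {0::'a} \<subseteq> {x. poly ?P x = 0}" using all by (auto simp: poly_monom)
    then have "card (UNIV - {0::'a}) \<le> card {x. poly ?P x = 0}" by (intro card_mono) auto
    also have "\<dots> \<le> m" using card_poly_roots_bound[OF P0] dP by simp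
    finally have "q - 1 \<le> m" using card by (simp add: card_Diff_singleton)
    then show False using q1 m0 by simp
  qed
  then obtain x :: 'a where x0: "x \<noteq> 0" and xm: "x^m \<noteq> 1" by blast
  have "(x^m)^2 = 1" using fermat_ff[OF x0] card q1 by (simp flip: power_mult add: mult.commute)
  then have "x^m = 1 \<or> x^m = -1" using sqrt_pm[of "x^m" 1] by simp
  then have xm1: "x^m = -1" using xm by simp
  define k where "k = (q - 1) div 8"
  have "4*k = m" unfolding k_def m_def using dv by auto
  then have "(x^k)^4 = -1" using xm1 by (simp flip: power_mult add: mult.commute)
  then show ?thesis by blast
qed

definition psi :: "'k::field \<Rightarrow> 'k mat2 \<Rightarrow> 'k mat2" where
  "psi z M = (case M of (a,b,c,d) \<Rightarrow> (a, b/z, c*z, d))"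
definition psii :: "'k::field \<Rightarrow> 'k mat2 \<Rightarrow> 'k mat2" where
  "psii z M = (case M of (a,b,c,d) \<Rightarrow> (a, z*b, c/z, d))"

lemma psi_psii: "z \<noteq> 0 \<Longrightarrow> psi z (psii z M) = M" "z \<noteq> 0 \<Longrightarrow> psii z (psi z M) = M"
  unfolding psi_def psii_def by (cases M; simp)+

lemma psi_mem:
  fixes z :: "'k::field" assumes z: "z^4 = -1" and M: "M \<in> curve_aut_set f_plus"
  shows "psi z M \<in> curve_aut_set f_minus"
proof -
  have z0: "z \<noteq> 0" using z_facts[OF z] by simp
  obtain a b c d where MM: "M = (a,b,c,d)" by (cases M) auto
  have "eqs_plus a (z*(b/z)) c d" using M z0 unfolding MM curve_aut_set_def by (simp add: pres_plus)
  then have "eqs_minus a (b/z) (c*z) d" using conj_eqs[OF z] by blast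
  moreover have "a*d - b/z*(c*z) = a*d - b*c" using z0 by simp
  ultimately show ?thesis using M unfolding MM curve_aut_set_def psi_def mat2_det_def by (simp add: pres_minus)
qed

lemma psii_mem:
  fixes z :: "'k::field" assumes z: "z^4 = -1" and M: "M \<in> curve_aut_set f_minus"
  shows "psii z M \<in> curve_aut_set f_plus"
proof -
  have z0: "z \<noteq> 0" using z_facts[OF z] by simp
  obtain a b c d where MM: "M = (a,b,c,d)" by (cases M) auto
  have "eqs_minus a b ((c/z)*z) d" using M z0 unfolding MM curve_aut_set_def by (simp add: pres_minus)
  then have "eqs_plus a (z*b) (c/z) d" using conj_eqs[OF z] by blast
  moreover have "a*d - (z*b)*(c/z) = a*d - b*c" using z0 by simp
  ultimately show ?thesis using M unfolding MM curve_aut_set_def psii_def mat2_det_def by (simp add: pres_plus)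
qed

lemma psi_bij:
  fixes z :: "'k::field" assumes z: "z^4 = -1"
  shows "bij_betw (psi z) (curve_aut_set f_plus) (curve_aut_set f_minus)"
  by (rule bij_betwI[where g="psii z"]) (use psi_mem[OF z] psii_mem[OF z] psi_psii z_facts(1)[OF z] in auto)

lemma S_plus_psii:
  fixes z :: "'k::field" assumes z: "z^4 = -1"
  shows "curve_aut_set f_plus = psii z ` curve_aut_set f_minus"
proof
  show "curve_aut_set f_plus \<subseteq> psii z ` curve_aut_set f_minus"
  proof
    fix M assume "M \<in> curve_aut_set (f_plus::'k poly)"
    then show "M \<in> psii z ` curve_aut_set f_minus"
      using psi_mem[OF z] psi_psii(2)[OF z_facts(1)[OF z]] by (metis image_eqI)
  qed
  show "psii z ` curve_aut_set f_minus \<subseteq> curve_aut_set f_plus" using psii_mem[OF z] by auto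
qed

lemma inj_psii: "z \<noteq> 0 \<Longrightarrow> inj (psii z)"
  by (metis injI psi_psii(1))

lemma psi_mult: "z \<noteq> 0 \<Longrightarrow> psi z (mat2_mult M N) = mat2_mult (psi z M) (psi z N)"
  unfolding psi_def mat2_mult_def by (cases M; cases N) (simp add: field_simps)

lemma map_mult: "mat2_map to_ac (mat2_mult M N) = mat2_mult (mat2_map to_ac M) (mat2_map to_ac (N::'k::field mat2))"
  unfolding mat2_map_def mat2_mult_def by (cases M; cases N) simp

lemma map_psii: "mat2_map to_ac (psii z M) = psii (to_ac z) (mat2_map to_ac (M::'k::field mat2))"
  unfolding mat2_map_def psii_def by (cases M) simp

lemma inj_map: "inj (mat2_map (to_ac :: 'k::field \<Rightarrow> 'k alg_closure))"
  unfolding mat2_map_def by (rule injI) (auto split: prod.splits)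

lemma map_f: "map_poly to_ac (f_minus :: 'k::field poly) = f_minus" "map_poly to_ac (f_plus :: 'k::field poly) = f_plus"
  unfolding f_minus_def f_plus_def by (simp_all add: map_poly_pCons)

lemma general_iso:
  fixes z :: "'k::field"
  assumes z: "z^4 = -1"
    and img: "mat2_map to_ac ` curve_aut_set (f_plus::'k poly) = curve_aut_set f_plus"
  shows "curve_aut_group (f_plus::'k poly) \<cong> Aut_bar (f_minus :: 'k poly)"
proof -
  define zL where "zL = to_ac z"
  have zL: "zL^4 = -1" unfolding zL_def using z by (metis to_ac_power to_ac_minus to_ac_1)
  have zL0: "zL \<noteq> 0" using z_facts(1)[OF zL] .
  define h where "h = psi zL \<circ> mat2_map to_ac"
  have H: "Aut_bar (f_minus :: 'k poly) = curve_aut_group f_minus" unfolding Aut_bar_def map_f ..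
  have bij1: "bij_betw (mat2_map to_ac) (curve_aut_set (f_plus::'k poly)) (curve_aut_set f_plus)"
    using img inj_map by (simp add: bij_betw_def inj_on_subset[OF inj_map])
  have bij: "bij_betw h (curve_aut_set (f_plus::'k poly)) (curve_aut_set f_minus)"
    unfolding h_def by (rule bij_betw_trans[OF bij1 psi_bij[OF zL]])
  have "h \<in> hom (curve_aut_group (f_plus::'k poly)) (curve_aut_group f_minus)"
    unfolding hom_def curve_aut_group_def using bij_betwE[OF bij]
    by (auto simp: h_def psi_mult[OF zL0] map_mult)
  then have "h \<in> iso (curve_aut_group (f_plus::'k poly)) (curve_aut_group f_minus)"
    using bij unfolding iso_def curve_aut_group_def by simp
  then show ?thesis unfolding H by (rule is_isoI)
qed

theorem mainTheorem2:
  fixes p q :: nat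
  assumes "prime p" and "odd p"
    and "CHAR('a::{field,finite}) = p" and "card (UNIV :: 'a set) = q"
    and "8 dvd (q - 1)"
    and "\<exists>s::'a. s^2 = 2"
  shows "(p \<noteq> 3 \<and> p \<noteq> 5 \<longrightarrow>
            curve_aut_group (f_plus :: 'a poly) \<cong> Aut_bar (f_minus :: 'a poly)
          \<and> mat2_map to_ac ` curve_aut_set (f_plus :: 'a poly) = carrier (Aut_bar (f_plus :: 'a poly))
          \<and> Coset.order (curve_aut_group (f_plus :: 'a poly)) = 48)
       \<and> (p = 5 \<longrightarrow>
            curve_aut_group (f_plus :: 'a poly) \<cong> Aut_bar (f_minus :: 'a poly)
          \<and> mat2_map to_ac ` curve_aut_set (f_plus :: 'a poly) = carrier (Aut_bar (f_plus :: 'a poly))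
          \<and> Coset.order (curve_aut_group (f_plus :: 'a poly)) = 240)"
proof -
  note pp = assms(1) and podd = assms(2) and ch = assms(3)
  obtain z :: 'a where z: "z^4 = -1" using exists_z8[OF assms(4,5)] by blast
  obtain s :: 'a where s: "s^2 = 2" using assms(6) by blast
  define zL where "zL = to_ac z"
  define sL where "sL = to_ac s"
  have zL: "zL^4 = -1" unfolding zL_def using z by (metis to_ac_power to_ac_minus to_ac_1)
  have sL: "sL^2 = 2" unfolding sL_def using s by (metis to_ac_power to_ac_numeral)
  have carr: "carrier (Aut_bar (f_plus :: 'a poly)) = curve_aut_set f_plus"
    unfolding Aut_bar_def map_f curve_aut_group_def by simp
  have ord: "Coset.order (curve_aut_group (f_plus :: 'a poly)) = card (curve_aut_set (f_plus :: 'a poly))"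
    unfolding Coset.order_def curve_aut_group_def by simp
  have two: "(2::'a) \<noteq> 0"
  proof
    assume "(2::'a) = 0"
    then have "(of_nat 2::'a) = 0" by simp
    then have "p dvd 2" using ch by (simp only: of_nat_eq_0_iff_char_dvd)
    then have "p \<le> 2" by (simp add: dvd_imp_le)
    moreover have "p \<ge> 2" using pp by (simp add: prime_ge_2_nat)
    ultimately show False using podd by simp
  qed
  have twoL: "(2::'a alg_closure) \<noteq> 0" using two by (metis to_ac_numeral to_ac_eq_0_iff)
  have A: "p \<noteq> 3 \<and> p \<noteq> 5 \<longrightarrow>
            curve_aut_group (f_plus :: 'a poly) \<cong> Aut_bar (f_minus :: 'a poly)
          \<and> mat2_map to_ac ` curve_aut_set (f_plus :: 'a poly) = carrier (Aut_bar (f_plus :: 'a poly))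
          \<and> Coset.order (curve_aut_group (f_plus :: 'a poly)) = 48"
  proof
    assume p35: "p \<noteq> 3 \<and> p \<noteq> 5"
    have five: "(5::'a) \<noteq> 0"
    proof
      assume "(5::'a) = 0"
      then have "(of_nat 5::'a) = 0" by simp
      then have "p dvd 5" using ch by (simp only: of_nat_eq_0_iff_char_dvd)
      moreover have "p \<le> 5" using \<open>p dvd 5\<close> by (simp add: dvd_imp_le)
      moreover have "p \<ge> 2" using pp by (simp add: prime_ge_2_nat)
      ultimately have "p = 2 \<or> p = 3 \<or> p = 4 \<or> p = 5" by auto
      then show False using p35 podd \<open>p dvd 5\<close> by auto
    qed
    have fiveL: "(5::'a alg_closure) \<noteq> 0" using five by (metis to_ac_numeral to_ac_eq_0_iff)
    have SK: "curve_aut_set (f_plus :: 'a poly) = Eset z" by (rule S_plus_eq[OF two five z])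
    have SL: "curve_aut_set (f_plus :: 'a alg_closure poly) = Eset zL" by (rule S_plus_eq[OF twoL fiveL zL])
    have img: "mat2_map to_ac ` curve_aut_set (f_plus :: 'a poly) = curve_aut_set f_plus"
      unfolding SK SL zL_def by (rule map_Eset)
    show "curve_aut_group (f_plus :: 'a poly) \<cong> Aut_bar (f_minus :: 'a poly)
          \<and> mat2_map to_ac ` curve_aut_set (f_plus :: 'a poly) = carrier (Aut_bar (f_plus :: 'a poly))
          \<and> Coset.order (curve_aut_group (f_plus :: 'a poly)) = 48"
      using general_iso[OF z img] img carr ord SK Eset_card[OF two z] by simp
  qed
  have B: "p = 5 \<longrightarrow>
            curve_aut_group (f_plus :: 'a poly) \<cong> Aut_bar (f_minus :: 'a poly)
          \<and> mat2_map to_ac ` curve_aut_set (f_plus :: 'a poly) = carrier (Aut_bar (f_plus :: 'a poly))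
          \<and> Coset.order (curve_aut_group (f_plus :: 'a poly)) = 240"
  proof
    assume p5: "p = 5"
    have five: "(5::'a) = 0"
    proof -
      have "(of_nat 5::'a) = 0" using ch p5 by (simp only: of_nat_eq_0_iff_char_dvd) simp
      then show ?thesis by simp
    qed
    have fiveL: "(5::'a alg_closure) = 0" using five by (metis to_ac_numeral to_ac_0)
    have EK: "curve_aut_set (f_minus :: 'a poly) = E5 z s"
      using S5_sub[OF five z s] E5_sub[OF five z s] by blast
    have EL: "curve_aut_set (f_minus :: 'a alg_closure poly) = E5 zL sL"
      using S5_sub[OF fiveL zL sL] E5_sub[OF fiveL zL sL] by blast
    have SK: "curve_aut_set (f_plus :: 'a poly) = psii z ` E5 z s" using S_plus_psii[OF z] EK by simp
    have SL: "curve_aut_set (f_plus :: 'a alg_closure poly) = psii zL ` E5 zL sL"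
      using S_plus_psii[OF zL] EL by simp
    have img: "mat2_map to_ac ` curve_aut_set (f_plus :: 'a poly) = curve_aut_set f_plus"
      unfolding SK SL image_image map_psii zL_def sL_def
      by (simp only: map_E5[symmetric, of z s] image_image)
    have c: "card (curve_aut_set (f_plus :: 'a poly)) = 240"
      unfolding SK using card_image[OF inj_on_subset[OF inj_psii[OF z_facts(1)[OF z]]]] E5_card[OF five z s]
      by simp
    show "curve_aut_group (f_plus :: 'a poly) \<cong> Aut_bar (f_minus :: 'a poly)
          \<and> mat2_map to_ac ` curve_aut_set (f_plus :: 'a poly) = carrier (Aut_bar (f_plus :: 'a poly))
          \<and> Coset.order (curve_aut_group (f_plus :: 'a poly)) = 240"
      using general_iso[OF z img] img carr ord c by simp
  qed
  show ?thesis using A B by blast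
qed

end
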